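(* The generating function $$F_{(213,231)}(x,p,q,u,v,s,t)=\sum_{n\ge0}\ \sum_{\pi\in S_n(213,231)} x^n p^{\operatorname{asc}(\pi)}q^{\operatorname{des}(\pi)}u^{\operatorname{lrmax}(\pi)}v^{\operatorname{rlmax}(\pi)}s^{\operatorname{lrmin}(\pi)}t^{\operatorname{rlmin}(\pi)}$$ is equal to $\dfrac{A}{(1-ptux)(1-ptx-qvx)(1-qsvx)}$, where $$\begin{aligned}A={}&1 - p t x - p t u x - q v x - q s v x + s t u v x + p^2 t^2 u x^2 + p q s t v x^2 + p q t u v x^2 + p q s t u v x^2 - p s t^2 u v x^2 + q^2 s v^2 x^2\\ &- q s t u v^2 x^2 - p^2 q s t^2 u v x^3 - p q^2 s t u v^2 x^3 + p q s^2 t^2 u v^2 x^3 + p q s t^2 u^2 v^2 x^3 - p q s^2 t^2 u^2 v^2 x^3.\end{aligned}$$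
   Context: For $n\ge 0$, $S_n$ denotes the set of permutations $\pi=\pi_1\cdots\pi_n$ of $[n]=\{1,\dots,n\}$ ($S_0$ consists of the empty permutation, for which all statistics are $0$). $\pi$ avoids a pattern $\tau\in S_k$ if no subsequence $\pi_{i_1}\cdots\pi_{i_k}$ ($i_1<\dots<i_k$) satisfies $\pi_{i_a}<\pi_{i_b}\iff\tau_a<\tau_b$; $S_n(\tau,\rho)$ is the set of permutations in $S_n$ avoiding both $\tau$ and $\rho$. $\operatorname{asc}(\pi)$ (resp. $\operatorname{des}(\pi)$) is the number of $i\in[n-1]$ with $\pi_i<\pi_{i+1}$ (resp. $\pi_i>\pi_{i+1}$). $\pi_i$ is a left-to-right maximum (resp. minimum) if it is larger (resp. smaller) than every $\pi_j$ with $j<i$, and a right-to-left maximum (resp. minimum) if it is larger (resp. smaller) than every $\pi_j$ with $j>i$; $\operatorname{lrmax},\operatorname{lrmin},\operatorname{rlmax},\operatorname{rlmin}$ count these. *)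

theory Defs
  imports "HOL-Combinatorics.Multiset_Permutations" "HOL-Library.Sublist"
          "HOL-Computational_Algebra.Formal_Power_Series"
begin

text \<open>Permutations of [n] are represented as lists pi_1 ... pi_n (one-line notation);
  list positions are 0-based.\<close>

definition contains_pattern :: "nat list \<Rightarrow> nat list \<Rightarrow> bool" where
  "contains_pattern \<pi> \<tau> \<longleftrightarrow>
     (\<exists>\<sigma>. subseq \<sigma> \<pi> \<and> length \<sigma> = length \<tau> \<and>
        (\<forall>a<length \<tau>. \<forall>b<length \<tau>. (\<sigma>!a < \<sigma>!b \<longleftrightarrow> \<tau>!a < \<tau>!b)))"

definition avoids :: "nat list \<Rightarrow> nat list \<Rightarrow> bool" where
  "avoids \<pi> \<tau> \<longleftrightarrow> \<not> contains_pattern \<pi> \<tau>"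

definition Av2 :: "nat \<Rightarrow> nat list \<Rightarrow> nat list \<Rightarrow> nat list set" where
  "Av2 n \<tau> \<rho> = {\<pi> \<in> permutations_of_set {1..n}. avoids \<pi> \<tau> \<and> avoids \<pi> \<rho>}"

definition asc :: "nat list \<Rightarrow> nat" where
  "asc \<pi> = card {i. Suc i < length \<pi> \<and> \<pi>!i < \<pi>!(Suc i)}"

definition des :: "nat list \<Rightarrow> nat" where
  "des \<pi> = card {i. Suc i < length \<pi> \<and> \<pi>!i > \<pi>!(Suc i)}"

definition lrmax :: "nat list \<Rightarrow> nat" where
  "lrmax \<pi> = card {i. i < length \<pi> \<and> (\<forall>j<i. \<pi>!j < \<pi>!i)}"

definition lrmin :: "nat list \<Rightarrow> nat" where
  "lrmin \<pi> = card {i. i < length \<pi> \<and> (\<forall>j<i. \<pi>!j > \<pi>!i)}"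

definition rlmax :: "nat list \<Rightarrow> nat" where
  "rlmax \<pi> = card {i. i < length \<pi> \<and> (\<forall>j. i < j \<and> j < length \<pi> \<longrightarrow> \<pi>!j < \<pi>!i)}"

definition rlmin :: "nat list \<Rightarrow> nat" where
  "rlmin \<pi> = card {i. i < length \<pi> \<and> (\<forall>j. i < j \<and> j < length \<pi> \<longrightarrow> \<pi>!j > \<pi>!i)}"

end

theory Submission
  imports Defs
begin


fun good :: "nat list \<Rightarrow> bool" where
  "good [] = True"
| "good (x#xs) = (((\<forall>y\<in>set xs. y < x) \<or> (\<forall>y\<in>set xs. x < y)) \<and> good xs)"

lemma cp213: "contains_pattern \<pi> [2,1,3] \<longleftrightarrow> (\<exists>a b c. subseq [a,b,c] \<pi> \<and> b < a \<and> a < c)"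
proof
  assume "contains_pattern \<pi> [2,1,3]"
  then obtain \<sigma> where s: "subseq \<sigma> \<pi>" "length \<sigma> = 3"
     and o: "\<forall>a<3. \<forall>b<3. (\<sigma>!a < \<sigma>!b \<longleftrightarrow> [2::nat,1,3]!a < [2,1,3]!b)"
    unfolding contains_pattern_def by auto
  then obtain a b c where "\<sigma> = [a,b,c]"
    by (metis (no_types) length_0_conv length_Suc_conv numeral_3_eq_3)
  with s o show "\<exists>a b c. subseq [a,b,c] \<pi> \<and> b < a \<and> a < c"
    by (auto simp: All_less_Suc numeral_3_eq_3)
next
  assume "\<exists>a b c. subseq [a,b,c] \<pi> \<and> b < a \<and> a < c"
  then obtain a b c where "subseq [a,b,c] \<pi>" "b < a" "a < c" by blast
  then show "contains_pattern \<pi> [2,1,3]"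
    unfolding contains_pattern_def
    by (intro exI[of _ "[a,b,c]"]) (auto simp: All_less_Suc numeral_3_eq_3)
qed

lemma cp231: "contains_pattern \<pi> [2,3,1] \<longleftrightarrow> (\<exists>a b c. subseq [a,b,c] \<pi> \<and> c < a \<and> a < b)"
proof
  assume "contains_pattern \<pi> [2,3,1]"
  then obtain \<sigma> where s: "subseq \<sigma> \<pi>" "length \<sigma> = 3"
     and o: "\<forall>a<3. \<forall>b<3. (\<sigma>!a < \<sigma>!b \<longleftrightarrow> [2::nat,3,1]!a < [2,3,1]!b)"
    unfolding contains_pattern_def by auto
  then obtain a b c where "\<sigma> = [a,b,c]"
    by (metis (no_types) length_0_conv length_Suc_conv numeral_3_eq_3)
  with s o show "\<exists>a b c. subseq [a,b,c] \<pi> \<and> c < a \<and> a < b"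
    by (auto simp: All_less_Suc numeral_3_eq_3)
next
  assume "\<exists>a b c. subseq [a,b,c] \<pi> \<and> c < a \<and> a < b"
  then obtain a b c where "subseq [a,b,c] \<pi>" "c < a" "a < b" by blast
  then show "contains_pattern \<pi> [2,3,1]"
    unfolding contains_pattern_def
    by (intro exI[of _ "[a,b,c]"]) (auto simp: All_less_Suc numeral_3_eq_3)
qed

lemma two_elems: "y \<in> set xs \<Longrightarrow> z \<in> set xs \<Longrightarrow> y \<noteq> z \<Longrightarrow> subseq [y,z] xs \<or> subseq [z,y] xs"
  by (induction xs) (auto simp: subseq_singleton_left)

lemma subseq3_Cons: "subseq [a,b,c] (x#xs) \<longleftrightarrow> subseq [a,b,c] xs \<or> (a = x \<and> subseq [b,c] xs)"
  by (auto dest: subseq_Cons')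

lemma subseq2_set: "subseq [b,c] xs \<Longrightarrow> b \<in> set xs \<and> c \<in> set xs"
  by (metis list.set_intros(1) list.set_intros(2) subseq_order.dual_order.trans subseq_singleton_left subseq_Cons' subseq_singleton_left)

lemma avoid_good: "distinct \<pi> \<Longrightarrow>
  (\<not> contains_pattern \<pi> [2,1,3] \<and> \<not> contains_pattern \<pi> [2,3,1]) \<longleftrightarrow> good \<pi>"
proof (induction \<pi>)
  case Nil
  show ?case unfolding cp213 cp231 by simp
next
  case (Cons x xs)
  have side: "((\<forall>y\<in>set xs. y < x) \<or> (\<forall>y\<in>set xs. x < y)) \<longleftrightarrow>
      \<not>(\<exists>b c. subseq [b,c] xs \<and> (b < x \<and> x < c \<or> c < x \<and> x < b))"
  proof
    assume "(\<forall>y\<in>set xs. y < x) \<or> (\<forall>y\<in>set xs. x < y)"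
    then show "\<not>(\<exists>b c. subseq [b,c] xs \<and> (b < x \<and> x < c \<or> c < x \<and> x < b))"
      using subseq2_set by fastforce
  next
    assume h: "\<not>(\<exists>b c. subseq [b,c] xs \<and> (b < x \<and> x < c \<or> c < x \<and> x < b))"
    show "(\<forall>y\<in>set xs. y < x) \<or> (\<forall>y\<in>set xs. x < y)"
    proof (rule ccontr)
      assume "\<not> ?thesis"
      then obtain y z where yz: "y \<in> set xs" "z \<in> set xs" "\<not> y < x" "\<not> x < z" by auto
      have "x \<notin> set xs" using Cons.prems by simp
      with yz have "x < y" "z < x" by (metis linorder_neqE_nat)+
      with two_elems[OF yz(1,2)] h show False by auto
    qed
  qed
  have "(\<not> contains_pattern (x#xs) [2,1,3] \<and> \<not> contains_pattern (x#xs) [2,3,1]) \<longleftrightarrow>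
     (\<not> contains_pattern xs [2,1,3] \<and> \<not> contains_pattern xs [2,3,1]) \<and>
      \<not>(\<exists>b c. subseq [b,c] xs \<and> (b < x \<and> x < c \<or> c < x \<and> x < b))"
    unfolding cp213 cp231 subseq3_Cons by blast
  with side Cons show ?case by (simp add: conj_commute)
qed



lemma rl_aux: "(\<forall>j. Suc i < j \<and> j < Suc m \<longrightarrow> P j) \<longleftrightarrow> (\<forall>j. i < j \<and> j < m \<longrightarrow> P (Suc j))"
proof
  assume "\<forall>j. Suc i < j \<and> j < Suc m \<longrightarrow> P j" then show "\<forall>j. i < j \<and> j < m \<longrightarrow> P (Suc j)" by simp
next
  assume h: "\<forall>j. i < j \<and> j < m \<longrightarrow> P (Suc j)"
  show "\<forall>j. Suc i < j \<and> j < Suc m \<longrightarrow> P j"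
  proof (intro allI impI)
    fix j assume "Suc i < j \<and> j < Suc m"
    then obtain k where "j = Suc k" "i < k" "k < m" by (cases j) auto
    with h show "P j" by simp
  qed
qed

lemma rl_aux0: "(\<forall>j. 0 < j \<and> j < Suc (length \<sigma>) \<longrightarrow> (x#\<sigma>)!j < x) \<longleftrightarrow> (\<forall>y\<in>set \<sigma>. y < x)"
proof -
  have "(\<forall>j. 0 < j \<and> j < Suc (length \<sigma>) \<longrightarrow> (x#\<sigma>)!j < x) \<longleftrightarrow> (\<forall>k < length \<sigma>. \<sigma>!k < x)"
  proof
    assume "\<forall>j. 0 < j \<and> j < Suc (length \<sigma>) \<longrightarrow> (x#\<sigma>)!j < x"
    then show "\<forall>k < length \<sigma>. \<sigma>!k < x" by (metis Suc_less_eq nth_Cons_Suc zero_less_Suc)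
  next
    assume h: "\<forall>k < length \<sigma>. \<sigma>!k < x"
    show "\<forall>j. 0 < j \<and> j < Suc (length \<sigma>) \<longrightarrow> (x#\<sigma>)!j < x"
    proof (intro allI impI)
      fix j assume "0 < j \<and> j < Suc (length \<sigma>)"
      then obtain k where "j = Suc k" "k < length \<sigma>" by (cases j) auto
      with h show "(x#\<sigma>)!j < x" by simp
    qed
  qed
  also have "\<dots> \<longleftrightarrow> (\<forall>y\<in>set \<sigma>. y < x)" by (metis in_set_conv_nth)
  finally show ?thesis .
qed

lemma rl_aux0': "(\<forall>j. 0 < j \<and> j < Suc (length \<sigma>) \<longrightarrow> (x#\<sigma>)!j > x) \<longleftrightarrow> (\<forall>y\<in>set \<sigma>. y > x)"
proof -
  have "(\<forall>j. 0 < j \<and> j < Suc (length \<sigma>) \<longrightarrow> (x#\<sigma>)!j > x) \<longleftrightarrow> (\<forall>k < length \<sigma>. \<sigma>!k > x)"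
  proof
    assume "\<forall>j. 0 < j \<and> j < Suc (length \<sigma>) \<longrightarrow> (x#\<sigma>)!j > x"
    then show "\<forall>k < length \<sigma>. \<sigma>!k > x" by (metis Suc_less_eq nth_Cons_Suc zero_less_Suc)
  next
    assume h: "\<forall>k < length \<sigma>. \<sigma>!k > x"
    show "\<forall>j. 0 < j \<and> j < Suc (length \<sigma>) \<longrightarrow> (x#\<sigma>)!j > x"
    proof (intro allI impI)
      fix j assume "0 < j \<and> j < Suc (length \<sigma>)"
      then obtain k where "j = Suc k" "k < length \<sigma>" by (cases j) auto
      with h show "(x#\<sigma>)!j > x" by simp
    qed
  qed
  also have "\<dots> \<longleftrightarrow> (\<forall>y\<in>set \<sigma>. y > x)" by (metis in_set_conv_nth)
  finally show ?thesis .
qed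


lemma card_Suc_split: "card {i. i < Suc m \<and> Q i} = (if Q 0 then 1 else 0) + card {i. i < m \<and> Q (Suc i)}"
proof -
  have e: "{i. i < Suc m \<and> Q i} = (if Q 0 then {0} else {}) \<union> Suc ` {i. i < m \<and> Q (Suc i)}"
    by (auto simp: image_iff less_Suc_eq_0_disj)
  have "card ((if Q 0 then {0} else {}) \<union> Suc ` {i. i < m \<and> Q (Suc i)}) =
        card (if Q 0 then {0::nat} else {}) + card (Suc ` {i. i < m \<and> Q (Suc i)})"
    by (rule card_Un_disjoint) auto
  also have "card (Suc ` {i. i < m \<and> Q (Suc i)}) = card {i. i < m \<and> Q (Suc i)}"
    by (rule card_image) auto
  finally show ?thesis using e by simp
qed

lemma lrmax_Cons: "lrmax (x#\<sigma>) = 1 + card {i. i < length \<sigma> \<and> x < \<sigma>!i \<and> (\<forall>j<i. \<sigma>!j < \<sigma>!i)}"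
  unfolding lrmax_def by (simp add: card_Suc_split All_less_Suc2)
lemma lrmin_Cons: "lrmin (x#\<sigma>) = 1 + card {i. i < length \<sigma> \<and> x > \<sigma>!i \<and> (\<forall>j<i. \<sigma>!j > \<sigma>!i)}"
  unfolding lrmin_def by (simp add: card_Suc_split All_less_Suc2)


lemma rlmax_Cons: "rlmax (x#\<sigma>) = (if \<forall>y\<in>set \<sigma>. y < x then 1 else 0) + rlmax \<sigma>"
  unfolding rlmax_def by (simp add: card_Suc_split rl_aux rl_aux0 del: nth_Cons_pos)
lemma rlmin_Cons: "rlmin (x#\<sigma>) = (if \<forall>y\<in>set \<sigma>. y > x then 1 else 0) + rlmin \<sigma>"
  unfolding rlmin_def by (simp add: card_Suc_split rl_aux rl_aux0' del: nth_Cons_pos)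

lemma asc_Cons2: "asc (x#y#\<tau>) = (if x < y then 1 else 0) + asc (y#\<tau>)"
  unfolding asc_def by (simp add: card_Suc_split del: nth_Cons_Suc)
lemma des_Cons2: "des (x#y#\<tau>) = (if x > y then 1 else 0) + des (y#\<tau>)"
  unfolding des_def by (simp add: card_Suc_split del: nth_Cons_Suc)



definition wt :: "'a::comm_ring_1 \<Rightarrow> 'a \<Rightarrow> 'a \<Rightarrow> 'a \<Rightarrow> 'a \<Rightarrow> 'a \<Rightarrow> nat list \<Rightarrow> 'a" where
  "wt p q u v s t \<pi> = p ^ asc \<pi> * q ^ des \<pi> * u ^ lrmax \<pi> * v ^ rlmax \<pi> * s ^ lrmin \<pi> * t ^ rlmin \<pi>"

lemma nth_in_set_lt: "\<forall>y\<in>set \<sigma>. y < x \<Longrightarrow> i < length \<sigma> \<Longrightarrow> \<sigma>!i < x" by simp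
lemma nth_in_set_gt: "\<forall>y\<in>set \<sigma>. x < y \<Longrightarrow> i < length \<sigma> \<Longrightarrow> x < \<sigma>!i" by simp

lemma stats_max:
  assumes "\<sigma> \<noteq> []" "\<forall>y\<in>set \<sigma>. y < x"
  shows "asc (x#\<sigma>) = asc \<sigma>" "des (x#\<sigma>) = Suc (des \<sigma>)" "lrmax (x#\<sigma>) = 1"
    "rlmax (x#\<sigma>) = Suc (rlmax \<sigma>)" "lrmin (x#\<sigma>) = Suc (lrmin \<sigma>)" "rlmin (x#\<sigma>) = rlmin \<sigma>"
proof -
  obtain y \<tau> where st: "\<sigma> = y#\<tau>" using assms(1) by (cases \<sigma>) auto
  have xy: "y < x" using assms(2) st by simp
  show "asc (x#\<sigma>) = asc \<sigma>" using st xy asc_Cons2 by simp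
  show "des (x#\<sigma>) = Suc (des \<sigma>)" using st xy des_Cons2 by simp
  have "{i. i < length \<sigma> \<and> x < \<sigma>!i \<and> (\<forall>j<i. \<sigma>!j < \<sigma>!i)} = {}"
    using nth_in_set_lt[OF assms(2)] by (auto dest: less_asym)
  then show "lrmax (x#\<sigma>) = 1" by (simp add: lrmax_Cons)
  show "rlmax (x#\<sigma>) = Suc (rlmax \<sigma>)" using assms by (simp add: rlmax_Cons)
  have "{i. i < length \<sigma> \<and> x > \<sigma>!i \<and> (\<forall>j<i. \<sigma>!j > \<sigma>!i)} = {i. i < length \<sigma> \<and> (\<forall>j<i. \<sigma>!j > \<sigma>!i)}"
    using nth_in_set_lt[OF assms(2)] by auto
  then show "lrmin (x#\<sigma>) = Suc (lrmin \<sigma>)" by (simp add: lrmin_Cons lrmin_def[of \<sigma>])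
  show "rlmin (x#\<sigma>) = rlmin \<sigma>" using st xy by (simp add: rlmin_Cons)
qed

lemma stats_min:
  assumes "\<sigma> \<noteq> []" "\<forall>y\<in>set \<sigma>. x < y"
  shows "asc (x#\<sigma>) = Suc (asc \<sigma>)" "des (x#\<sigma>) = des \<sigma>" "lrmin (x#\<sigma>) = 1"
    "rlmin (x#\<sigma>) = Suc (rlmin \<sigma>)" "lrmax (x#\<sigma>) = Suc (lrmax \<sigma>)" "rlmax (x#\<sigma>) = rlmax \<sigma>"
proof -
  obtain y \<tau> where st: "\<sigma> = y#\<tau>" using assms(1) by (cases \<sigma>) auto
  have xy: "x < y" using assms(2) st by simp
  show "asc (x#\<sigma>) = Suc (asc \<sigma>)" using st xy asc_Cons2 by simp
  show "des (x#\<sigma>) = des \<sigma>" using st xy des_Cons2 by simp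
  have "{i. i < length \<sigma> \<and> x > \<sigma>!i \<and> (\<forall>j<i. \<sigma>!j > \<sigma>!i)} = {}"
    using nth_in_set_gt[OF assms(2)] by (auto dest: less_asym)
  then show "lrmin (x#\<sigma>) = 1" by (simp add: lrmin_Cons)
  show "rlmin (x#\<sigma>) = Suc (rlmin \<sigma>)" using assms by (simp add: rlmin_Cons)
  have "{i. i < length \<sigma> \<and> x < \<sigma>!i \<and> (\<forall>j<i. \<sigma>!j < \<sigma>!i)} = {i. i < length \<sigma> \<and> (\<forall>j<i. \<sigma>!j < \<sigma>!i)}"
    using nth_in_set_gt[OF assms(2)] by auto
  then show "lrmax (x#\<sigma>) = Suc (lrmax \<sigma>)" by (simp add: lrmax_Cons lrmax_def[of \<sigma>])
  show "rlmax (x#\<sigma>) = rlmax \<sigma>" using st xy by (simp add: rlmax_Cons)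
qed

lemma wt_max: "\<sigma> \<noteq> [] \<Longrightarrow> \<forall>y\<in>set \<sigma>. y < x \<Longrightarrow>
   wt p q u v s t (x#\<sigma>) = q*u*v*s * wt p q 1 v s t \<sigma>"
  unfolding wt_def by (simp add: stats_max mult_ac)

lemma wt_min: "\<sigma> \<noteq> [] \<Longrightarrow> \<forall>y\<in>set \<sigma>. x < y \<Longrightarrow>
   wt p q u v s t (x#\<sigma>) = p*u*s*t * wt p q u v 1 t \<sigma>"
  unfolding wt_def by (simp add: stats_min mult_ac)

lemma wt_single: "wt p q u v s t [x] = u*v*s*t"
  unfolding wt_def by (simp add: asc_def des_def lrmax_Cons lrmin_Cons rlmax_Cons rlmin_Cons rlmax_def rlmin_def)

lemma wt_Nil: "wt p q u v s t [] = 1"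
  unfolding wt_def asc_def des_def lrmax_def rlmax_def lrmin_def rlmin_def by simp



definition Pg :: "nat set \<Rightarrow> nat list set" where
  "Pg S = {\<pi> \<in> permutations_of_set S. good \<pi>}"

fun ff :: "nat \<Rightarrow> 'a::comm_ring_1 \<Rightarrow> 'a \<Rightarrow> 'a \<Rightarrow> 'a \<Rightarrow> 'a \<Rightarrow> 'a \<Rightarrow> 'a" where
  "ff 0 p q u v s t = 1"
| "ff (Suc 0) p q u v s t = u*v*s*t"
| "ff (Suc (Suc n)) p q u v s t = q*u*v*s * ff (Suc n) p q 1 v s t + p*u*s*t * ff (Suc n) p q u v 1 t"

lemma Pg_decomp:
  assumes "finite S" "2 \<le> card S"
  shows "Pg S = Cons (Max S) ` Pg (S - {Max S}) \<union> Cons (Min S) ` Pg (S - {Min S})"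
proof
  have ne: "S \<noteq> {}" using assms by auto
  show "Pg S \<subseteq> Cons (Max S) ` Pg (S - {Max S}) \<union> Cons (Min S) ` Pg (S - {Min S})"
  proof
    fix \<pi> assume "\<pi> \<in> Pg S"
    then have \<pi>: "set \<pi> = S" "distinct \<pi>" "good \<pi>" unfolding Pg_def permutations_of_set_def by auto
    then obtain x xs where xs: "\<pi> = x#xs" using ne by (cases \<pi>) auto
    have sx: "S = insert x (set xs)" "x \<notin> set xs" "distinct xs" using \<pi> xs by auto
    have xsP: "xs \<in> permutations_of_set (S - {x})" using sx by (auto simp: permutations_of_set_def)
    have g: "good xs" "(\<forall>y\<in>set xs. y < x) \<or> (\<forall>y\<in>set xs. x < y)" using \<pi> xs by auto
    show "\<pi> \<in> Cons (Max S) ` Pg (S - {Max S}) \<union> Cons (Min S) ` Pg (S - {Min S})"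
    proof (cases "\<forall>y\<in>set xs. y < x")
      case True
      then have "x = Max S" using sx assms(1) by (intro Max_eqI[symmetric]) auto
      then show ?thesis using xs xsP g by (auto simp: Pg_def)
    next
      case False
      then have "\<forall>y\<in>set xs. x < y" using g by auto
      then have "x = Min S" using sx assms(1) by (intro Min_eqI[symmetric]) auto
      then show ?thesis using xs xsP g by (auto simp: Pg_def)
    qed
  qed
  show "Cons (Max S) ` Pg (S - {Max S}) \<union> Cons (Min S) ` Pg (S - {Min S}) \<subseteq> Pg S"
  proof
    fix \<pi> assume "\<pi> \<in> Cons (Max S) ` Pg (S - {Max S}) \<union> Cons (Min S) ` Pg (S - {Min S})"
    then show "\<pi> \<in> Pg S"
    proof
      assume "\<pi> \<in> Cons (Max S) ` Pg (S - {Max S})"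
      then obtain xs where xs: "\<pi> = Max S # xs" "set xs = S - {Max S}" "distinct xs" "good xs"
        unfolding Pg_def permutations_of_set_def by auto
      have "\<forall>y\<in>set xs. y < Max S" using xs assms(1) by (auto simp: order.strict_iff_order)
      moreover have "Max S \<in> S" using Max_in[OF assms(1) ne] .
      then have "set \<pi> = S" using xs by auto
      ultimately show ?thesis using xs unfolding Pg_def permutations_of_set_def by auto
    next
      assume "\<pi> \<in> Cons (Min S) ` Pg (S - {Min S})"
      then obtain xs where xs: "\<pi> = Min S # xs" "set xs = S - {Min S}" "distinct xs" "good xs"
        unfolding Pg_def permutations_of_set_def by auto
      have "\<forall>y\<in>set xs. Min S < y" using xs assms(1) by (auto simp: order.strict_iff_order)
      moreover have "Min S \<in> S" using Min_in[OF assms(1) ne] .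
      then have "set \<pi> = S" using xs by auto
      ultimately show ?thesis using xs unfolding Pg_def permutations_of_set_def by auto
    qed
  qed
qed

lemma lt_Max: "finite S \<Longrightarrow> y \<in> S - {Max S} \<Longrightarrow> y < Max S"
  using Max_ge[of S y] by (simp add: order_less_le)
lemma gt_Min: "finite S \<Longrightarrow> y \<in> S - {Min S} \<Longrightarrow> Min S < y"
  using Min_le[of S y] by (auto simp: order_less_le)

lemma Pg_finite: "finite S \<Longrightarrow> finite (Pg S)"
  unfolding Pg_def by simp

lemma Max_ne_Min: "finite S \<Longrightarrow> 2 \<le> card S \<Longrightarrow> Max S \<noteq> Min S"
proof
  assume a: "finite S" "2 \<le> card S" "Max S = Min S"
  then have "S \<noteq> {}" by auto
  then have "\<forall>y\<in>S. y = Max S" using a by (metis Max_ge Min_le antisym)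
  then have "S \<subseteq> {Max S}" by auto
  then have "card S \<le> card {Max S}" by (intro card_mono) auto
  then have "card S \<le> 1" by simp
  with a show False by simp
qed

lemma sum_Pg:
  "finite S \<Longrightarrow> card S = n \<Longrightarrow> (\<Sum>\<pi>\<in>Pg S. wt p q u v s t \<pi>) = ff n p q u v s t"
proof (induction n arbitrary: S u s rule: less_induct)
  case (less n)
  show ?case
  proof (cases n)
    case 0
    then have "S = {}" using less by auto
    have "Pg {} = {[]}" by (auto simp: Pg_def)
    then show ?thesis using 0 \<open>S = {}\<close> by (simp add: wt_Nil)
  next
    case (Suc m)
    show ?thesis
    proof (cases m)
      case 0
      then obtain x where "S = {x}" using less Suc by (auto dest: card_eq_SucD)
      have "Pg S = {[x]}" using \<open>S = {x}\<close> by (auto simp: Pg_def)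
      then show ?thesis using Suc 0 by (simp add: wt_single)
    next
      case (Suc k)
      have n2: "n = Suc (Suc k)" using Suc \<open>n = Suc m\<close> by simp
      have c2: "2 \<le> card S" using less n2 by simp
      have ne: "S \<noteq> {}" using c2 by auto
      have MS: "Max S \<in> S" "Min S \<in> S" using less(2) ne by auto
      have cM: "card (S - {Max S}) = Suc k" "card (S - {Min S}) = Suc k"
        using MS less n2 by auto
      have fM: "finite (S - {Max S})" "finite (S - {Min S})" using less by auto
      have wM: "(\<Sum>\<pi>\<in>Cons (Max S) ` Pg (S - {Max S}). wt p q u v s t \<pi>) = q*u*v*s * ff (Suc k) p q 1 v s t"
      proof -
        have "(\<Sum>\<pi>\<in>Cons (Max S) ` Pg (S - {Max S}). wt p q u v s t \<pi>)
              = (\<Sum>\<sigma>\<in>Pg (S - {Max S}). wt p q u v s t (Max S # \<sigma>))"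
          by (subst sum.reindex) (auto simp: inj_on_def)
        also have "\<dots> = (\<Sum>\<sigma>\<in>Pg (S - {Max S}). q*u*v*s * wt p q 1 v s t \<sigma>)"
        proof (rule sum.cong[OF refl])
          fix \<sigma> assume "\<sigma> \<in> Pg (S - {Max S})"
          then have "set \<sigma> = S - {Max S}" unfolding Pg_def permutations_of_set_def by auto
          moreover have "S - {Max S} \<noteq> {}" using cM(1) by (metis card.empty nat.distinct(1))
          ultimately show "wt p q u v s t (Max S # \<sigma>) = q*u*v*s * wt p q 1 v s t \<sigma>"
            using less(2) lt_Max[OF less(2)] by (intro wt_max) auto
        qed
        also have "\<dots> = q*u*v*s * ff (Suc k) p q 1 v s t"
          using less.IH[of "Suc k" "S - {Max S}"] n2 cM fM by (simp add: sum_distrib_left[symmetric])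
        finally show ?thesis .
      qed
      have wm: "(\<Sum>\<pi>\<in>Cons (Min S) ` Pg (S - {Min S}). wt p q u v s t \<pi>) = p*u*s*t * ff (Suc k) p q u v 1 t"
      proof -
        have "(\<Sum>\<pi>\<in>Cons (Min S) ` Pg (S - {Min S}). wt p q u v s t \<pi>)
              = (\<Sum>\<sigma>\<in>Pg (S - {Min S}). wt p q u v s t (Min S # \<sigma>))"
          by (subst sum.reindex) (auto simp: inj_on_def)
        also have "\<dots> = (\<Sum>\<sigma>\<in>Pg (S - {Min S}). p*u*s*t * wt p q u v 1 t \<sigma>)"
        proof (rule sum.cong[OF refl])
          fix \<sigma> assume "\<sigma> \<in> Pg (S - {Min S})"
          then have "set \<sigma> = S - {Min S}" unfolding Pg_def permutations_of_set_def by auto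
          moreover have "S - {Min S} \<noteq> {}" using cM(2) by (metis card.empty nat.distinct(1))
          ultimately show "wt p q u v s t (Min S # \<sigma>) = p*u*s*t * wt p q u v 1 t \<sigma>"
            using less(2) gt_Min[OF less(2)] by (intro wt_min) auto
        qed
        also have "\<dots> = p*u*s*t * ff (Suc k) p q u v 1 t"
          using less.IH[of "Suc k" "S - {Min S}"] n2 cM fM by (simp add: sum_distrib_left[symmetric])
        finally show ?thesis .
      qed
      have disj: "Cons (Max S) ` Pg (S - {Max S}) \<inter> Cons (Min S) ` Pg (S - {Min S}) = {}"
        using Max_ne_Min[OF less(2) c2] by auto
      have "(\<Sum>\<pi>\<in>Pg S. wt p q u v s t \<pi>) =
            (\<Sum>\<pi>\<in>Cons (Max S) ` Pg (S - {Max S}). wt p q u v s t \<pi>) +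
            (\<Sum>\<pi>\<in>Cons (Min S) ` Pg (S - {Min S}). wt p q u v s t \<pi>)"
        unfolding Pg_decomp[OF less(2) c2]
        by (rule sum.union_disjoint) (use fM Pg_finite disj in auto)
      then show ?thesis using wM wm n2 by simp
    qed
  qed
qed


lemma Av2_Pg: "Av2 n [2,1,3] [2,3,1] = Pg {1..n}"
proof -
  have "\<And>\<pi>. \<pi> \<in> permutations_of_set {1..n} \<Longrightarrow> (avoids \<pi> [2,1,3] \<and> avoids \<pi> [2,3,1]) = good \<pi>"
    unfolding avoids_def permutations_of_set_def by (rule avoid_good) simp
  then show ?thesis unfolding Av2_def Pg_def by blast
qed

lemma coeff_formula: "(\<Sum>\<pi>\<in>Av2 n [2,1,3] [2,3,1].
        p ^ asc \<pi> * q ^ des \<pi> * u ^ lrmax \<pi> * v ^ rlmax \<pi> * s ^ lrmin \<pi> * t ^ rlmin \<pi>) = ff n p q u v s t"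
  using sum_Pg[of "{1..n}" n p q u v s t] unfolding Av2_Pg wt_def by simp


lemma ff_rec:
  fixes p q u v s t :: "'a::comm_ring_1"
  defines "a \<equiv> p*t*u" and "b \<equiv> p*t+q*v" and "c \<equiv> q*s*v"
  shows "ff (Suc (Suc (Suc (Suc (Suc n))))) p q u v s t
     - (a+b+c) * ff (Suc (Suc (Suc (Suc n)))) p q u v s t
     + (a*b+b*c+c*a) * ff (Suc (Suc (Suc n))) p q u v s t
     - a*b*c * ff (Suc (Suc n)) p q u v s t = 0"
  unfolding a_def b_def c_def
  by (simp only: ff.simps) (simp add: algebra_simps)



definition "e1 (p::'a::field) q u v s t = p*t*u + (p*t+q*v) + q*s*v"
definition "e2 (p::'a::field) q u v s t = p*t*u*(p*t+q*v) + (p*t+q*v)*(q*s*v) + q*s*v*(p*t*u)"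
definition "e3 (p::'a::field) q u v s t = p*t*u*(p*t+q*v)*(q*s*v)"
definition "A1 (p::'a::field) q u v s t = - p*t - p*t*u - q*v - q*s*v + s*t*u*v"
definition "A2 (p::'a::field) q u v s t = p^2*t^2*u + p*q*s*t*v + p*q*t*u*v + p*q*s*t*u*v - p*s*t^2*u*v + q^2*s*v^2 - q*s*t*u*v^2"
definition "A3 (p::'a::field) q u v s t = - (p^2*q*s*t^2*u*v) - p*q^2*s*t*u*v^2 + p*q*s^2*t^2*u*v^2 + p*q*s*t^2*u^2*v^2 - p*q*s^2*t^2*u^2*v^2"

lemma c1: "ff 1 p q u v s t - e1 p q u v s t * ff 0 p q u v s t = A1 p q u v s t"
  unfolding e1_def A1_def by (simp add: algebra_simps)
lemma c2: "ff 2 p q u v s t - e1 p q u v s t * ff 1 p q u v s t + e2 p q u v s t * ff 0 p q u v s t = A2 p q u v s t"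
  unfolding e1_def e2_def A2_def by (simp add: numeral_eq_Suc algebra_simps power2_eq_square)
lemma c3: "ff 3 p q u v s t - e1 p q u v s t * ff 2 p q u v s t + e2 p q u v s t * ff 1 p q u v s t - e3 p q u v s t * ff 0 p q u v s t = A3 p q u v s t"
  unfolding e1_def e2_def e3_def A3_def by (simp add: numeral_eq_Suc algebra_simps power2_eq_square)
lemma c4: "ff 4 p q u v s t - e1 p q u v s t * ff 3 p q u v s t + e2 p q u v s t * ff 2 p q u v s t - e3 p q u v s t * ff 1 p q u v s t = 0"
  unfolding e1_def e2_def e3_def by (simp add: numeral_eq_Suc algebra_simps)
lemma c5: "ff (Suc (Suc (Suc (Suc (Suc m))))) p q u v s t - e1 p q u v s t * ff (Suc (Suc (Suc (Suc m)))) p q u v s t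
   + e2 p q u v s t * ff (Suc (Suc (Suc m))) p q u v s t - e3 p q u v s t * ff (Suc (Suc m)) p q u v s t = 0"
  unfolding e1_def e2_def e3_def using ff_rec[where n=m and p=p and q=q and u=u and v=v and s=s and t=t] by simp

lemma fps_main:
  fixes p q u v s t :: "'a :: field"
  defines "F \<equiv> Abs_fps (\<lambda>n. ff n p q u v s t)"
  defines "D \<equiv> (1 - fps_const (p*t*u) * fps_X)
        * (1 - fps_const (p*t) * fps_X - fps_const (q*v) * fps_X)
        * (1 - fps_const (q*s*v) * fps_X)"
  defines "N \<equiv> (1 - fps_const (p*t) * fps_X - fps_const (p*t*u) * fps_X - fps_const (q*v) * fps_X
        - fps_const (q*s*v) * fps_X + fps_const (s*t*u*v) * fps_X
        + fps_const (p^2*t^2*u) * fps_X^2 + fps_const (p*q*s*t*v) * fps_X^2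
        + fps_const (p*q*t*u*v) * fps_X^2 + fps_const (p*q*s*t*u*v) * fps_X^2
        - fps_const (p*s*t^2*u*v) * fps_X^2 + fps_const (q^2*s*v^2) * fps_X^2
        - fps_const (q*s*t*u*v^2) * fps_X^2
        - fps_const (p^2*q*s*t^2*u*v) * fps_X^3 - fps_const (p*q^2*s*t*u*v^2) * fps_X^3
        + fps_const (p*q*s^2*t^2*u*v^2) * fps_X^3 + fps_const (p*q*s*t^2*u^2*v^2) * fps_X^3
        - fps_const (p*q*s^2*t^2*u^2*v^2) * fps_X^3)"
  shows "F * D = N"
proof -
  let ?e1 = "e1 p q u v s t" and ?e2 = "e2 p q u v s t" and ?e3 = "e3 p q u v s t"
  have D2: "D = 1 - fps_const ?e1 * fps_X + fps_const ?e2 * fps_X^2 - fps_const ?e3 * fps_X^3"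
  proof -
    have gen: "\<And>A B1 B2 C X :: 'a fps. (1 - A*X)*(1 - B1*X - B2*X)*(1-C*X) = 1 - (A+(B1+B2)+C)*X + (A*(B1+B2)+(B1+B2)*C+C*A)*X^2 - (A*(B1+B2)*C)*X^3"
      by (simp add: algebra_simps power2_eq_square power3_eq_cube)
    show ?thesis unfolding D_def gen e1_def e2_def e3_def by (simp only: fps_const_add fps_const_mult)
  qed
  have FD: "F * D = F - fps_const ?e1 * (F * fps_X^1) + fps_const ?e2 * (F * fps_X^2) - fps_const ?e3 * (F * fps_X^3)"
    unfolding D2 by (simp add: algebra_simps)
  have FDn: "fps_nth (F * D) n = ff n p q u v s t - ?e1 * (if n < 1 then 0 else ff (n-1) p q u v s t)
     + ?e2 * (if n < 2 then 0 else ff (n-2) p q u v s t) - ?e3 * (if n < 3 then 0 else ff (n-3) p q u v s t)" for n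
    unfolding FD unfolding F_def by (simp only: fps_sub_nth fps_add_nth fps_mult_left_const_nth fps_X_power_mult_right_nth fps_nth_Abs_fps)
  have Nn: "fps_nth N n = (if n = 0 then 1 else if n = 1 then A1 p q u v s t else if n = 2 then A2 p q u v s t
      else if n = 3 then A3 p q u v s t else 0)" for n
  proof -
    have e: "fps_nth N n = 1 * (if n = 0 then 1 else 0) - p*t * (if n = 1 then 1 else 0) - (p*t*u) * (if n = 1 then 1 else 0) - (q*v) * (if n = 1 then 1 else 0)
        - (q*s*v) * (if n = 1 then 1 else 0) + (s*t*u*v) * (if n = 1 then 1 else 0)
        + (p^2*t^2*u) * (if n = 2 then 1 else 0) + (p*q*s*t*v) * (if n = 2 then 1 else 0)
        + (p*q*t*u*v) * (if n = 2 then 1 else 0) + (p*q*s*t*u*v) * (if n = 2 then 1 else 0)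
        - (p*s*t^2*u*v) * (if n = 2 then 1 else 0) + (q^2*s*v^2) * (if n = 2 then 1 else 0)
        - (q*s*t*u*v^2) * (if n = 2 then 1 else 0)
        - (p^2*q*s*t^2*u*v) * (if n = 3 then 1 else 0) - (p*q^2*s*t*u*v^2) * (if n = 3 then 1 else 0)
        + (p*q*s^2*t^2*u*v^2) * (if n = 3 then 1 else 0) + (p*q*s*t^2*u^2*v^2) * (if n = 3 then 1 else 0)
        - (p*q*s^2*t^2*u^2*v^2) * (if n = 3 then 1 else 0)"
      unfolding N_def
      by (simp only: fps_sub_nth fps_add_nth fps_mult_left_const_nth fps_X_power_nth fps_one_nth fps_X_nth) simp
    show ?thesis
    proof (cases "n = 0")
      case True then show ?thesis unfolding e by simp
    next
      case n0: False
      show ?thesis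
      proof (cases "n = 1")
        case True then show ?thesis unfolding e A1_def by (simp add: algebra_simps)
      next
        case n1: False
        show ?thesis
        proof (cases "n = 2")
          case True then show ?thesis unfolding e A2_def by (simp add: algebra_simps)
        next
          case n2: False
          show ?thesis
          proof (cases "n = 3")
            case True then show ?thesis unfolding e A3_def by (simp add: algebra_simps)
          next
            case False then show ?thesis unfolding e using n0 n1 n2 by simp
          qed
        qed
      qed
    qed
  qed
  show ?thesis
  proof (rule fps_ext)
    fix n
    show "fps_nth (F * D) n = fps_nth N n"
    proof (cases "n \<ge> 5")
      case True
      define m where "m = n - 5"
      have m: "n = Suc (Suc (Suc (Suc (Suc m))))" using True unfolding m_def by simp
      have "fps_nth (F * D) n = ff (Suc (Suc (Suc (Suc (Suc m))))) p q u v s t - ?e1 * ff (Suc (Suc (Suc (Suc m)))) p q u v s t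
   + ?e2 * ff (Suc (Suc (Suc m))) p q u v s t - ?e3 * ff (Suc (Suc m)) p q u v s t"
        unfolding FDn m by (simp del: ff.simps)
      also have "\<dots> = 0" by (rule c5)
      also have "0 = fps_nth N n" unfolding Nn m by simp
      finally show ?thesis .
    next
      case False
      then have "n = 0 \<or> n = 1 \<or> n = 2 \<or> n = 3 \<or> n = 4" by auto
      moreover have "fps_nth (F * D) 0 = fps_nth N 0" unfolding FDn Nn by simp
      moreover have "fps_nth (F * D) 1 = fps_nth N 1"
      proof -
        have "fps_nth (F * D) 1 = ff 1 p q u v s t - ?e1 * ff 0 p q u v s t" unfolding FDn by (simp del: ff.simps)
        also have "\<dots> = fps_nth N 1" unfolding Nn using c1 by simp
        finally show ?thesis .
      qed
      moreover have "fps_nth (F * D) 2 = fps_nth N 2"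
      proof -
        have "fps_nth (F * D) 2 = ff 2 p q u v s t - ?e1 * ff 1 p q u v s t + ?e2 * ff 0 p q u v s t" unfolding FDn by (simp del: ff.simps)
        also have "\<dots> = fps_nth N 2" unfolding Nn using c2 by (simp del: ff.simps)
        finally show ?thesis .
      qed
      moreover have "fps_nth (F * D) 3 = fps_nth N 3"
      proof -
        have "fps_nth (F * D) 3 = ff 3 p q u v s t - ?e1 * ff 2 p q u v s t + ?e2 * ff 1 p q u v s t - ?e3 * ff 0 p q u v s t"
          unfolding FDn by (simp del: ff.simps)
        also have "\<dots> = fps_nth N 3" unfolding Nn using c3 by (simp del: ff.simps)
        finally show ?thesis .
      qed
      moreover have "fps_nth (F * D) 4 = fps_nth N 4"
      proof -
        have "fps_nth (F * D) 4 = ff 4 p q u v s t - ?e1 * ff 3 p q u v s t + ?e2 * ff 2 p q u v s t - ?e3 * ff 1 p q u v s t"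
          unfolding FDn by (simp del: ff.simps)
        also have "\<dots> = fps_nth N 4" unfolding Nn using c4 by (simp del: ff.simps)
        finally show ?thesis .
      qed
      ultimately show ?thesis by blast
    qed
  qed
qed


theorem theorem9:
  fixes p q u v s t :: "'a :: field"
  shows
  "Abs_fps (\<lambda>n. \<Sum>\<pi>\<in>Av2 n [2,1,3] [2,3,1].
        p ^ asc \<pi> * q ^ des \<pi> * u ^ lrmax \<pi> * v ^ rlmax \<pi> * s ^ lrmin \<pi> * t ^ rlmin \<pi>)
   = (1 - fps_const (p*t) * fps_X - fps_const (p*t*u) * fps_X - fps_const (q*v) * fps_X
        - fps_const (q*s*v) * fps_X + fps_const (s*t*u*v) * fps_X
        + fps_const (p^2*t^2*u) * fps_X^2 + fps_const (p*q*s*t*v) * fps_X^2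
        + fps_const (p*q*t*u*v) * fps_X^2 + fps_const (p*q*s*t*u*v) * fps_X^2
        - fps_const (p*s*t^2*u*v) * fps_X^2 + fps_const (q^2*s*v^2) * fps_X^2
        - fps_const (q*s*t*u*v^2) * fps_X^2
        - fps_const (p^2*q*s*t^2*u*v) * fps_X^3 - fps_const (p*q^2*s*t*u*v^2) * fps_X^3
        + fps_const (p*q*s^2*t^2*u*v^2) * fps_X^3 + fps_const (p*q*s*t^2*u^2*v^2) * fps_X^3
        - fps_const (p*q*s^2*t^2*u^2*v^2) * fps_X^3)
     / ((1 - fps_const (p*t*u) * fps_X)
        * (1 - fps_const (p*t) * fps_X - fps_const (q*v) * fps_X)
        * (1 - fps_const (q*s*v) * fps_X))"
proof -
  let ?F = "Abs_fps (\<lambda>n. ff n p q u v s t)"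
  let ?D = "(1 - fps_const (p*t*u) * fps_X)
        * (1 - fps_const (p*t) * fps_X - fps_const (q*v) * fps_X)
        * (1 - fps_const (q*s*v) * fps_X)"
  have L: "Abs_fps (\<lambda>n. \<Sum>\<pi>\<in>Av2 n [2,1,3] [2,3,1].
        p ^ asc \<pi> * q ^ des \<pi> * u ^ lrmax \<pi> * v ^ rlmax \<pi> * s ^ lrmin \<pi> * t ^ rlmin \<pi>) = ?F"
    by (simp only: coeff_formula)
  have D0: "fps_nth ?D 0 \<noteq> 0" by simp
  have "?F = ?F * (?D * inverse ?D)" using inverse_mult_eq_1'[OF D0] by simp
  also have "\<dots> = (?F * ?D) * inverse ?D" by (simp only: mult.assoc)
  also have "\<dots> = (?F * ?D) / ?D" using fps_divide_unit[OF D0] by simp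
  finally show ?thesis unfolding L fps_main .
qed

end
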